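(* Let $n\in\mathbb{N}=\{1,2,\dots\}$, $0\le i\le n-1$, and let $t_1<\dots<t_n$ be the zeros of $H_n$. (i) If $i$ is even, then $$\int_{-\infty}^\infty\frac{t^i}{i!}|h_n(t)|\,dt=\frac{1}{n!}\sum_{m=1}^n(-1)^{m+n}\sum_{k=0}^i\frac{(n-1-k)!}{2^k(i-k)!}t_m^{i-k}h_{n-1-k}(t_m).$$ (ii) If $i$ is odd and $n$ is even, then $$\int_{-\infty}^\infty\frac{|t|^i}{i!}|h_n(t)|\,dt=\frac{1}{n!}\sum_{m=1}^{n/2}(-1)^{m+1}\sum_{k=0}^i\frac{(n-1-k)!}{2^k(i-k)!}t_m^{i-k}h_{n-1-k}(t_m)+\frac{(-1)^{n/2}(n-1-i)!}{n!\,2^i}h_{n-1-i}(0)+\frac{1}{n!}\sum_{m=\frac n2+1}^{n}(-1)^{m}\sum_{k=0}^i\frac{(n-1-k)!}{2^k(i-k)!}t_m^{i-k}h_{n-1-k}(t_m);$$ and if $i$ is odd and $n$ is odd, then $$\int_{-\infty}^\infty\frac{|t|^i}{i!}|h_n(t)|\,dt=\frac{1}{n!}\sum_{m=1}^{\frac{n-1}{2}}(-1)^{m}\sum_{k=0}^i\frac{(n-1-k)!}{2^k(i-k)!}t_m^{i-k}h_{n-1-k}(t_m)+\frac{1}{n!}\sum_{m=\frac{n+3}{2}}^{n}(-1)^{m+1}\sum_{k=0}^i\frac{(n-1-k)!}{2^k(i-k)!}t_m^{i-k}h_{n-1-k}(t_m).$$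
   Context: $H_n$ denotes the $n$-th Hermite polynomial ($H_n(t)=(-1)^ne^{t^2}\frac{d^n}{dt^n}e^{-t^2}$, so $H_0=1$, $H_1(t)=2t$), and the Hermite functions are $h_n(t)=\frac{1}{2^nn!\sqrt{\pi}}e^{-t^2}H_n(t)$, $t\in\mathbb{R}$. The zeros of $H_n$ are real, simple and symmetric about $0$. *)

theory Defs
  imports "HOL-Analysis.Analysis"
begin

definition hermite :: "nat \<Rightarrow> real \<Rightarrow> real" where
  "hermite n t = (-1) ^ n * exp (t\<^sup>2) * ((deriv ^^ n) (\<lambda>x. exp (- (x\<^sup>2))) t)"

definition hermite_fun :: "nat \<Rightarrow> real \<Rightarrow> real" where
  "hermite_fun n t = exp (- (t\<^sup>2)) * hermite n t / (2 ^ n * fact n * sqrt pi)"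

definition inner_term :: "nat \<Rightarrow> nat \<Rightarrow> real \<Rightarrow> real" where
  "inner_term n i x = (\<Sum>k=0..i. fact (n - 1 - k) / (2 ^ k * fact (i - k)) * x ^ (i - k)
                                  * hermite_fun (n - 1 - k) x)"

end

theory Submission
  imports Defs "HOL-Computational_Algebra.Polynomial"
begin


fun Hp :: "nat \<Rightarrow> real poly" where
  "Hp 0 = 1"
| "Hp (Suc n) = [:0,2:] * Hp n - pderiv (Hp n)"

lemma gauss_deriv_poly:
  "((\<lambda>x. exp (-(x\<^sup>2)) * poly P x) has_real_derivative
     exp (-(x\<^sup>2)) * (poly (pderiv P) x - 2 * x * poly P x)) (at x)"
  by (auto intro!: derivative_eq_intros poly_DERIV simp: algebra_simps)

lemma rodrigues: "(deriv ^^ n) (\<lambda>x. exp (- (x\<^sup>2))) = (\<lambda>x. (-1)^n * exp (-(x\<^sup>2)) * poly (Hp n) x)"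
proof (induction n)
  case 0
  then show ?case by simp
next
  case (Suc n)
  have "(deriv ^^ Suc n) (\<lambda>x. exp (- (x\<^sup>2))) = deriv ((deriv ^^ n) (\<lambda>x. exp (- (x\<^sup>2))))" by simp
  also have "\<dots> = (\<lambda>x. (-1)^(Suc n) * exp (-(x\<^sup>2)) * poly (Hp (Suc n)) x)"
  proof
    fix x
    have "((\<lambda>x. (-1)^n * exp (-(x\<^sup>2)) * poly (Hp n) x) has_real_derivative
      (-1)^n * (exp (-(x\<^sup>2)) * (poly (pderiv (Hp n)) x - 2 * x * poly (Hp n) x))) (at x)"
      using DERIV_cmult[OF gauss_deriv_poly, of "(-1)^n" "Hp n" x] by (simp add: mult.assoc)
    from DERIV_imp_deriv[OF this]
    show "deriv ((deriv ^^ n) (\<lambda>x. exp (- (x\<^sup>2)))) x = (-1)^(Suc n) * exp (-(x\<^sup>2)) * poly (Hp (Suc n)) x"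
      unfolding Suc by (simp add: algebra_simps)
  qed
  finally show ?case .
qed

lemma hermite_poly: "hermite n x = poly (Hp n) x"
  unfolding hermite_def rodrigues by (simp add: exp_minus field_simps power_mult_distrib[symmetric] flip: power_mult)


lemma hf_poly: "hermite_fun m x = exp (-(x\<^sup>2)) * poly (Hp m) x / (2 ^ m * fact m * sqrt pi)"
  unfolding hermite_fun_def hermite_poly ..

lemma hf_deriv: "(hermite_fun m has_real_derivative (- 2 * real (Suc m) * hermite_fun (Suc m) x)) (at x)"
proof -
  have "((\<lambda>x. exp (-(x\<^sup>2)) * poly (Hp m) x / (2 ^ m * fact m * sqrt pi)) has_real_derivative
     exp (-(x\<^sup>2)) * (poly (pderiv (Hp m)) x - 2 * x * poly (Hp m) x) / (2 ^ m * fact m * sqrt pi)) (at x)"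
    by (intro DERIV_cdivide gauss_deriv_poly)
  moreover have "exp (-(x\<^sup>2)) * (poly (pderiv (Hp m)) x - 2 * x * poly (Hp m) x) / (2 ^ m * fact m * sqrt pi)
      = - 2 * real (Suc m) * hermite_fun (Suc m) x"
  proof -
    have p: "poly (Hp (Suc m)) x = 2 * x * poly (Hp m) x - poly (pderiv (Hp m)) x" by simp
    define r where "r = real (Suc m)"
    have r: "r > 0" "fact (Suc m) = r * fact m" unfolding r_def by auto
    have "sqrt pi > 0" by simp
    then show ?thesis unfolding hf_poly p r(2) r_def[symmetric] using r(1) by (simp add: field_simps)
  qed
  ultimately show ?thesis unfolding hf_poly[abs_def] by simp
qed

lemma hf_cont: "isCont (hermite_fun m) x"
  using hf_deriv DERIV_isCont by blast

definition Eterm :: "nat \<Rightarrow> nat \<Rightarrow> nat \<Rightarrow> real \<Rightarrow> real" where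
  "Eterm n i j x = (if j = 0 then 2 * fact n * x ^ i / fact i * hermite_fun n x
     else if j \<le> i then fact (n - j) / (2 ^ (j - 1) * fact (i - j)) * x ^ (i - j) * hermite_fun (n - j) x
     else 0)"

lemma term_deriv:
  assumes "k \<le> i" "i < n"
  shows "((\<lambda>x. fact (n - 1 - k) / (2 ^ k * fact (i - k)) * x ^ (i - k) * hermite_fun (n - 1 - k) x)
     has_real_derivative (Eterm n i (Suc k) x - Eterm n i k x)) (at x)"
proof -
  define C :: real where "C = fact (n - 1 - k) / (2 ^ k * fact (i - k))"
  have d: "((\<lambda>x. C * x ^ (i - k) * hermite_fun (n - 1 - k) x) has_real_derivative
     C * (real (i - k) * x ^ (i - k - 1)) * hermite_fun (n - 1 - k) x
     + C * x ^ (i - k) * (- 2 * real (Suc (n - 1 - k)) * hermite_fun (Suc (n - 1 - k)) x)) (at x)"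
    by (rule DERIV_cong[OF DERIV_mult[OF DERIV_cmult[OF DERIV_pow] hf_deriv]]) (simp add: algebra_simps)
  have sn: "Suc (n - 1 - k) = n - k" using assms by simp
  have A: "C * (real (i - k) * x ^ (i - k - 1)) * hermite_fun (n - 1 - k) x = Eterm n i (Suc k) x"
  proof (cases "k < i")
    case True
    then obtain d where d: "i - k = Suc d" by (metis Suc_diff_Suc)
    have "i - Suc k = d" "n - Suc k = n - 1 - k" using d by auto
    define r where "r = real (Suc d)"
    have r: "r > 0" "fact (Suc d) = r * fact d" unfolding r_def by auto
    have "real (i - k) = r" using d r_def by simp
    then show ?thesis using True d \<open>i - Suc k = d\<close> \<open>n - Suc k = n - 1 - k\<close> r unfolding Eterm_def C_def d r(2)
      by (simp add: field_simps)
  next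
    case False
    then show ?thesis using assms unfolding Eterm_def C_def by simp
  qed
  have B: "C * x ^ (i - k) * (- 2 * real (Suc (n - 1 - k)) * hermite_fun (Suc (n - 1 - k)) x) = - Eterm n i k x"
  proof (cases "k = 0")
    case True
    have "fact n = real n * fact (n - 1)" using assms
      by (metis Suc_pred' fact_Suc gr0I less_nat_zero_code mult.commute of_nat_fact)
    then show ?thesis using True assms sn unfolding Eterm_def C_def by (simp add: field_simps)
  next
    case False
    then obtain k' where k': "k = Suc k'" by (metis not0_implies_Suc)
    have f: "fact (n - k) = real (n - k) * fact (n - 1 - k)" using assms sn
      by (metis fact_Suc of_nat_fact)
    show ?thesis using False assms sn k' unfolding Eterm_def C_def f
      by (simp add: field_simps)
  qed
  have "(\<lambda>x. fact (n - 1 - k) / (2 ^ k * fact (i - k)) * x ^ (i - k) * hermite_fun (n - 1 - k) x)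
     = (\<lambda>x. C * x ^ (i - k) * hermite_fun (n - 1 - k) x)" unfolding C_def ..
  then show ?thesis using d unfolding A B by simp
qed

lemma inner_deriv:
  assumes "i < n"
  shows "(inner_term n i has_real_derivative (- (2 * fact n * x ^ i / fact i * hermite_fun n x))) (at x)"
proof -
  have "((\<lambda>x. inner_term n i x) has_real_derivative (\<Sum>k=0..i. Eterm n i (Suc k) x - Eterm n i k x)) (at x)"
    unfolding inner_term_def
    by (intro DERIV_sum term_deriv assms) auto
  also have "(\<Sum>k=0..i. Eterm n i (Suc k) x - Eterm n i k x) = Eterm n i (Suc i) x - Eterm n i 0 x"
    by (rule sum_Suc_diff) simp
  finally show ?thesis by (simp add: Eterm_def)
qed



definition good_filter :: "real filter \<Rightarrow> bool" where
  "good_filter F \<longleftrightarrow> filterlim (\<lambda>x::real. x^2) at_top F \<and> eventually (\<lambda>x. 1 \<le> \<bar>x\<bar>) F"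

lemma good_at_top: "good_filter at_top"
  unfolding good_filter_def
  by (auto intro!: filterlim_pow_at_top filterlim_ident eventually_mono[OF eventually_ge_at_top[of 1]])

lemma good_at_bot: "good_filter at_bot"
  unfolding good_filter_def
  by (auto intro!: filterlim_pow_at_bot_even filterlim_ident eventually_mono[OF eventually_le_at_bot[of "-1"]])

lemma mono_gauss_lim:
  assumes "good_filter F"
  shows "((\<lambda>x. x^k * exp(-(x\<^sup>2))) \<longlongrightarrow> 0) F"
proof -
  have g: "((\<lambda>x. (x\<^sup>2)^k / exp (x\<^sup>2)) \<longlongrightarrow> 0) F"
    using filterlim_compose[OF tendsto_power_div_exp_0 ] assms unfolding good_filter_def by blast
  have "eventually (\<lambda>x. norm (x^k * exp(-(x\<^sup>2))) \<le> (x\<^sup>2)^k / exp (x\<^sup>2)) F"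
    using assms unfolding good_filter_def
  proof (elim conjE eventually_mono)
    fix x :: real assume x: "1 \<le> \<bar>x\<bar>"
    have "\<bar>x\<bar>^k \<le> \<bar>x\<bar>^(2*k)" by (rule power_increasing) (use x in auto)
    also have "\<dots> = (x\<^sup>2)^k" by (simp add: power_mult)
    finally have "\<bar>x\<bar>^k \<le> (x\<^sup>2)^k" .
    then show "norm (x^k * exp(-(x\<^sup>2))) \<le> (x\<^sup>2)^k / exp (x\<^sup>2)"
      by (simp add: abs_mult power_abs exp_minus divide_inverse mult_right_mono)
  qed
  then show ?thesis using g by (rule Lim_null_comparison)
qed

lemma poly_gauss_lim:
  assumes "good_filter F"
  shows "((\<lambda>x. x^j * exp(-(x\<^sup>2)) * poly p x) \<longlongrightarrow> 0) F"
proof -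
  have "((\<lambda>x. \<Sum>i\<le>degree p. coeff p i * (x^(j+i) * exp(-(x\<^sup>2)))) \<longlongrightarrow> 0) F"
    by (intro tendsto_null_sum tendsto_mult_right_zero mono_gauss_lim assms)
  moreover have "(\<lambda>x. \<Sum>i\<le>degree p. coeff p i * (x^(j+i) * exp(-(x\<^sup>2)))) = (\<lambda>x. x^j * exp(-(x\<^sup>2)) * poly p x)"
    by (auto simp: poly_altdef sum_distrib_left power_add algebra_simps)
  ultimately show ?thesis by simp
qed

lemma inner_lim:
  assumes "good_filter F"
  shows "(inner_term n i \<longlongrightarrow> 0) F"
proof -
  have "((\<lambda>x. \<Sum>k=0..i. fact (n - 1 - k) / (2 ^ k * fact (i - k)) / (2 ^ (n-1-k) * fact (n-1-k) * sqrt pi)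
      * (x ^ (i - k) * exp (-(x\<^sup>2)) * poly (Hp (n - 1 - k)) x)) \<longlongrightarrow> 0) F"
    by (intro tendsto_null_sum tendsto_mult_right_zero poly_gauss_lim assms)
  moreover have "(\<lambda>x. \<Sum>k=0..i. fact (n - 1 - k) / (2 ^ k * fact (i - k)) / (2 ^ (n-1-k) * fact (n-1-k) * sqrt pi)
      * (x ^ (i - k) * exp (-(x\<^sup>2)) * poly (Hp (n - 1 - k)) x)) = inner_term n i"
    unfolding inner_term_def hf_poly by (intro ext sum.cong refl) simp
  ultimately show ?thesis by simp
qed


lemma mult_X2: "[:0,2:] * p = pCons 0 (smult 2 p)" for p :: "real poly"
  by (simp add: mult_pCons_left)

lemma Hp_deg_lead: "degree (Hp n) = n \<and> coeff (Hp n) n = 2 ^ n"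
proof (induction n)
  case 0
  then show ?case by simp
next
  case (Suc n)
  have d: "degree (Hp (Suc n)) \<le> Suc n"
    using Suc by (auto simp: mult_X2 degree_pderiv intro!: degree_diff_le)
  have c: "coeff (Hp (Suc n)) (Suc n) = 2 ^ Suc n"
    using Suc by (simp add: mult_X2 coeff_pderiv coeff_eq_0)
  then have "Suc n \<le> degree (Hp (Suc n))" by (intro le_degree) simp
  with d have "degree (Hp (Suc n)) = Suc n" by (rule antisym)
  with c show ?case by blast
qed

lemma Hp_parity_coeff: "odd (n + k) \<Longrightarrow> coeff (Hp n) k = 0"
proof (induction n arbitrary: k)
  case 0
  then show ?case by (cases k) auto
next
  case (Suc n)
  have a: "coeff (pderiv (Hp n)) k = 0" using Suc by (simp add: coeff_pderiv)
  have b: "coeff (pCons 0 (smult 2 (Hp n))) k = 0"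
    using Suc by (cases k) auto
  show ?case using a b by (simp add: mult_X2)
qed

lemma Hp_parity: "poly (Hp n) (-x) = (-1)^n * poly (Hp n) x"
proof -
  have "poly (Hp n) (-x) = (\<Sum>k\<le>degree (Hp n). coeff (Hp n) k * (-x) ^ k)" by (rule poly_altdef)
  also have "\<dots> = (\<Sum>k\<le>degree (Hp n). (-1)^n * (coeff (Hp n) k * x ^ k))"
  proof (rule sum.cong)
    fix k
    show "coeff (Hp n) k * (-x) ^ k = (-1)^n * (coeff (Hp n) k * x ^ k)"
    proof (cases "odd (n + k)")
      case True then show ?thesis by (simp add: Hp_parity_coeff)
    next
      case False
      then have "(-1::real)^k = (-1)^n" by (metis even_add neg_one_even_power neg_one_odd_power)
      then show ?thesis by (simp add: power_minus[of x k])
    qed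
  qed simp
  also have "\<dots> = (-1)^n * poly (Hp n) x" by (simp add: poly_altdef sum_distrib_left)
  finally show ?thesis .
qed

lemma roots_prod_dvd:
  fixes p :: "real poly"
  assumes "finite S" "\<forall>a\<in>S. poly p a = 0"
  shows "(\<Prod>a\<in>S. [:-a,1:]) dvd p"
  using assms
proof (induction S rule: finite_induct)
  case empty
  then show ?case by simp
next
  case (insert a S)
  then obtain q where q: "p = (\<Prod>b\<in>S. [:-b,1:]) * q" by auto
  have "poly (\<Prod>b\<in>S. [:-b,1:]) a \<noteq> 0"
    using insert(1,2) by (auto simp: poly_prod prod_zero_iff)
  moreover have "poly p a = 0" using insert by auto
  ultimately have "poly q a = 0" by (simp add: q)
  then have "[:-a,1:] dvd q" by (simp add: poly_eq_0_iff_dvd)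
  moreover have "(\<Prod>b\<in>insert a S. [:-b,1:]) = [:-a,1:] * (\<Prod>b\<in>S. [:-b,1:])" using insert(1,2) by simp
  ultimately show ?case unfolding q by (metis mult.commute mult_dvd_mono dvd_refl)
qed

lemma roots_factor:
  fixes p :: "real poly"
  assumes "finite S" "\<forall>a\<in>S. poly p a = 0" "p \<noteq> 0" "card S = degree p"
  shows "poly p x = lead_coeff p * (\<Prod>a\<in>S. (x - a))"
proof -
  obtain q where q: "p = (\<Prod>a\<in>S. [:-a,1:]) * q" using roots_prod_dvd[OF assms(1,2)] by auto
  have nz: "(\<Prod>a\<in>S. [:-a,1:]) \<noteq> (0 :: real poly)" by (auto simp: prod_zero_iff[OF assms(1)])
  have q0: "q \<noteq> 0" using assms(3) q by auto
  have dP: "degree ((\<Prod>a\<in>S. [:-a,1:]) :: real poly) = card S"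
    by (subst degree_prod_sum_eq) auto
  have "degree p = card S + degree q" using q nz q0 dP by (simp add: degree_mult_eq)
  then have "degree q = 0" using assms(4) by simp
  then have qc: "q = [:lead_coeff q:]" by (metis degree_0_id)
  have lc: "lead_coeff p = lead_coeff q" using q by (simp add: lead_coeff_mult lead_coeff_prod)
  have pq: "poly q x = lead_coeff q" by (subst qc) simp
  have "poly p x = poly (\<Prod>a\<in>S. [:-a,1:]) x * poly q x" using q by simp
  also have "\<dots> = (\<Prod>a\<in>S. (x - a)) * lead_coeff p" unfolding pq lc by (simp add: poly_prod)
  finally show ?thesis by simp
qed



lemma sum_by_parts_nat:
  fixes e v :: "nat \<Rightarrow> real"
  shows "(\<Sum>j=0..N. e j * (v (Suc j) - v j)) =
     (\<Sum>m=1..N. (e (m - 1) - e m) * v m) + e N * v (Suc N) - e 0 * v 0"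
proof (induction N)
  case 0
  then show ?case by (simp add: algebra_simps)
next
  case (Suc N)
  have "(\<Sum>m=1..Suc N. (e (m - 1) - e m) * v m) = (\<Sum>m=1..N. (e (m - 1) - e m) * v m) + (e N - e (Suc N)) * v (Suc N)"
    by simp
  then show ?case using Suc by (simp add: algebra_simps)
qed

lemma piece_unique:
  fixes s :: "nat \<Rightarrow> real"
  assumes mono: "strict_mono_on {1..N} s" and N: "N \<ge> 1" and x: "x \<notin> s ` {1..N}"
  shows "\<exists>J\<le>N. (J = 0 \<or> s J < x) \<and> (J = N \<or> x < s (Suc J)) \<and>
     (\<forall>j\<le>N. (j = 0 \<or> s j < x) \<and> (j = N \<or> x < s (Suc j)) \<longrightarrow> j = J)"
proof -
  have uniq: "j = k" if "j \<le> N" "k \<le> N" "(j = 0 \<or> s j < x) \<and> (j = N \<or> x < s (Suc j))"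
    "(k = 0 \<or> s k < x) \<and> (k = N \<or> x < s (Suc k))" for j k
  proof (rule ccontr)
    assume "j \<noteq> k"
    then consider "j < k" | "k < j" by linarith
    then show False
    proof cases
      case 1
      then have "x < s (Suc j)" "s k < x" using that by auto
      moreover have "s (Suc j) \<le> s k"
        using 1 that strict_mono_on_leD[OF mono] by (cases "Suc j = k") auto
      ultimately show False by simp
    next
      case 2
      then have "x < s (Suc k)" "s j < x" using that by auto
      moreover have "s (Suc k) \<le> s j"
        using 2 that strict_mono_on_leD[OF mono] by (cases "Suc k = j") auto
      ultimately show False by simp
    qed
  qed
  define A where "A = {m\<in>{1..N}. s m < x}"
  have fA: "finite A" unfolding A_def by simp
  show ?thesis
  proof (cases "A = {}")
    case True
    have "s 1 \<noteq> x" using x N by auto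
    moreover have "\<not> s 1 < x" using True N unfolding A_def by auto
    ultimately have "x < s (Suc 0)" by simp
    moreover have "\<forall>j\<le>N. (j = 0 \<or> s j < x) \<and> (j = N \<or> x < s (Suc j)) \<longrightarrow> j = 0"
    proof (intro allI impI)
      fix j assume "j \<le> N" "(j = 0 \<or> s j < x) \<and> (j = N \<or> x < s (Suc j))"
      then show "j = 0" using uniq[of j 0] \<open>x < s (Suc 0)\<close> by blast
    qed
    ultimately show ?thesis by blast
  next
    case False
    define J where "J = Max A"
    have JA: "J \<in> A" using False fA unfolding J_def by simp
    then have J: "1 \<le> J" "J \<le> N" "s J < x" unfolding A_def by auto
    have "J = N \<or> x < s (Suc J)"
    proof (cases "J = N")
      case False
      then have "Suc J \<in> {1..N}" using J by auto
      moreover have "Suc J \<notin> A" using Max_ge[OF fA, of "Suc J"] unfolding J_def by auto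
      ultimately have "\<not> s (Suc J) < x" "s (Suc J) \<noteq> x" using x unfolding A_def by auto
      then show ?thesis by simp
    qed simp
    moreover have "\<forall>j\<le>N. (j = 0 \<or> s j < x) \<and> (j = N \<or> x < s (Suc j)) \<longrightarrow> j = J"
    proof (intro allI impI)
      fix j assume "j \<le> N" "(j = 0 \<or> s j < x) \<and> (j = N \<or> x < s (Suc j))"
      then show "j = J" using uniq[of j J] J \<open>J = N \<or> x < s (Suc J)\<close> by blast
    qed
    ultimately show ?thesis using J by blast
  qed
qed

lemma piecewise_integral:
  fixes f F g :: "real \<Rightarrow> real" and s e :: "nat \<Rightarrow> real" and N :: nat
  assumes N: "N \<ge> 1"
    and mono: "strict_mono_on {1..N} s"
    and F: "\<And>x. (F has_real_derivative f x) (at x)"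
    and fc: "\<And>x. isCont f x"
    and Ftop: "(F \<longlongrightarrow> 0) at_top" and Fbot: "(F \<longlongrightarrow> 0) at_bot"
    and gc: "continuous_on UNIV g"
    and piece: "\<And>j x. j \<le> N \<Longrightarrow> (j = 0 \<or> s j < x) \<Longrightarrow> (j = N \<or> x < s (Suc j)) \<Longrightarrow>
        g x = e j * f x \<and> 0 \<le> e j * f x"
  shows "integrable lborel g \<and> integral\<^sup>L lborel g = (\<Sum>m=1..N. (e (m - 1) - e m) * F (s m))"
proof -
  define a where "a j = (if j = 0 then -\<infinity> else ereal (s j))" for j
  define b where "b j = (if j = N then \<infinity> else ereal (s (Suc j)))" for j
  define v where "v m = (if m = 0 \<or> m = Suc N then 0 else F (s m))" for m
  define I where "I j = einterval (a j) (b j)" for j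
  have memI: "x \<in> I j \<longleftrightarrow> (j = 0 \<or> s j < x) \<and> (j = N \<or> x < s (Suc j))" if "j \<le> N" for j x
    unfolding I_def einterval_def a_def b_def by auto
  have Fc: "isCont F x" for x using F DERIV_isCont by blast
  have piece_int: "set_integrable lborel (I j) g \<and> set_lebesgue_integral lborel (I j) g = e j * (v (Suc j) - v j)"
    if j: "j \<le> N" for j
  proof -
    have ab: "a j < b j"
    proof (cases "j = 0 \<or> j = N")
      case True then show ?thesis unfolding a_def b_def by auto
    next
      case False
      then have "s j < s (Suc j)" using j by (intro strict_mono_onD[OF mono]) auto
      then show ?thesis using False unfolding a_def b_def by auto
    qed
    have A: "(((\<lambda>x. e j * F x) \<circ> real_of_ereal) \<longlongrightarrow> e j * v j) (at_right (a j))"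
    proof (cases "j = 0")
      case True
      then show ?thesis using tendsto_mult_right_zero[OF Fbot, of "e j"]
        by (simp add: a_def v_def ereal_tendsto_simps1)
    next
      case False
      have "(F \<longlongrightarrow> F (s j)) (at_right (s j))"
        using Fc[of "s j"] unfolding isCont_def by (rule tendsto_mono[OF at_le, rotated]) simp
      then have "((\<lambda>x. e j * F x) \<longlongrightarrow> e j * F (s j)) (at_right (s j))" by (intro tendsto_mult tendsto_const)
      then show ?thesis using False j by (simp add: a_def v_def ereal_tendsto_simps1)
    qed
    have B: "(((\<lambda>x. e j * F x) \<circ> real_of_ereal) \<longlongrightarrow> e j * v (Suc j)) (at_left (b j))"
    proof (cases "j = N")
      case True
      then show ?thesis using tendsto_mult_right_zero[OF Ftop, of "e j"]
        by (simp add: b_def v_def ereal_tendsto_simps1)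
    next
      case False
      have "(F \<longlongrightarrow> F (s (Suc j))) (at_left (s (Suc j)))"
        using Fc[of "s (Suc j)"] unfolding isCont_def by (rule tendsto_mono[OF at_le, rotated]) simp
      then have "((\<lambda>x. e j * F x) \<longlongrightarrow> e j * F (s (Suc j))) (at_left (s (Suc j)))" by (intro tendsto_mult tendsto_const)
      then show ?thesis using False j by (simp add: b_def v_def ereal_tendsto_simps1)
    qed
    have pos: "AE x in lborel. a j < ereal x \<longrightarrow> ereal x < b j \<longrightarrow> 0 \<le> e j * f x"
      using piece[OF j] memI[OF j] unfolding I_def einterval_def by auto
    note FTC = interval_integral_FTC_nonneg[OF ab, of "\<lambda>x. e j * F x" "\<lambda>x. e j * f x", OF _ _ pos A B]
    have d: "((\<lambda>x. e j * F x) has_real_derivative e j * f x) (at x)" for x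
      by (intro DERIV_cmult F)
    have c: "isCont (\<lambda>x. e j * f x) x" for x using fc by simp
    note FTC' = FTC[OF d c]
    have eq: "\<And>x. x \<in> I j \<Longrightarrow> g x = e j * f x" using piece[OF j] memI[OF j] by auto
    have si: "set_integrable lborel (I j) g"
    proof -
      have "set_integrable lborel (I j) g = set_integrable lborel (I j) (\<lambda>x. e j * f x)"
        by (rule set_integrable_cong) (auto simp: eq)
      then show ?thesis using FTC'(1) unfolding I_def by simp
    qed
    have "set_lebesgue_integral lborel (I j) g = set_lebesgue_integral lborel (I j) (\<lambda>x. e j * f x)"
      by (rule set_lebesgue_integral_cong) (auto simp: eq I_def)
    also have "\<dots> = e j * v (Suc j) - e j * v j"
    proof -
      have le: "a j \<le> b j" using ab by simp
      show ?thesis using FTC'(2) unfolding interval_lebesgue_integral_def I_def if_P[OF le] .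
    qed
    finally show ?thesis using si by (simp add: algebra_simps)
  qed
  define h where "h x = (\<Sum>j=0..N. indicator (I j) x *\<^sub>R g x)" for x
  have hint: "integrable lborel h"
    unfolding h_def
    by (rule Bochner_Integration.integrable_sum[where f="\<lambda>j x. indicator (I j) x *\<^sub>R g x"])
       (use piece_int in \<open>auto simp: set_integrable_def\<close>)
  have hval: "integral\<^sup>L lborel h = (\<Sum>j=0..N. e j * (v (Suc j) - v j))"
    unfolding h_def using piece_int
    by (subst Bochner_Integration.integral_sum[where f="\<lambda>j x. indicator (I j) x *\<^sub>R g x"])
       (auto simp: set_integrable_def set_lebesgue_integral_def)
  have ae: "AE x in lborel. h x = g x"
  proof -
    have "AE x in lborel. x \<notin> s ` {1..N}"
      by (intro AE_not_in finite_imp_null_set_lborel) simp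
    then show ?thesis
    proof (rule AE_mp, intro AE_I2 impI)
      fix x assume x: "x \<notin> s ` {1..N}"
      obtain J where J: "J \<le> N" "(J = 0 \<or> s J < x) \<and> (J = N \<or> x < s (Suc J))"
        "\<forall>j\<le>N. (j = 0 \<or> s j < x) \<and> (j = N \<or> x < s (Suc j)) \<longrightarrow> j = J"
        using piece_unique[OF mono N x] by blast
      have "h x = (\<Sum>j=0..N. (if j = J then g x else 0))"
        unfolding h_def
      proof (rule sum.cong)
        fix j assume "j \<in> {0..N}"
        then have jN: "j \<le> N" by simp
        show "indicator (I j) x *\<^sub>R g x = (if j = J then g x else 0)"
        proof (cases "j = J")
          case True
          then have "x \<in> I j" using memI[OF jN] J(2) by blast
          then show ?thesis using True by simp
        next
          case False
          then have "x \<notin> I j" using memI[OF jN] J(3) jN by blast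
          then show ?thesis using False by simp
        qed
      qed simp
      also have "\<dots> = g x" using J(1) by simp
      finally show "h x = g x" .
    qed
  qed
  have gm: "g \<in> borel_measurable lborel"
    using borel_measurable_continuous_onI[OF gc] by simp
  have hm: "h \<in> borel_measurable lborel" using hint by (rule borel_measurable_integrable)
  have gint: "integrable lborel g" using integrable_cong_AE[OF hm gm ae] hint by simp
  have "integral\<^sup>L lborel g = integral\<^sup>L lborel h" using ae by (intro integral_cong_AE gm hm) (auto elim: AE_mp)
  also have "\<dots> = (\<Sum>m=1..N. (e (m - 1) - e m) * v m) + e N * v (Suc N) - e 0 * v 0"
    unfolding hval by (rule sum_by_parts_nat)
  also have "\<dots> = (\<Sum>m=1..N. (e (m - 1) - e m) * F (s m))"
    unfolding v_def by (auto intro!: sum.cong)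
  finally show ?thesis using gint by simp
qed



lemma hermite_sign:
  fixes t :: "nat \<Rightarrow> real"
  assumes mono: "strict_mono_on {1..n} t" and Z: "{x. hermite n x = 0} = t ` {1..n}"
    and j: "j \<le> n" and x: "(j = 0 \<or> t j < x) \<and> (j = n \<or> x < t (Suc j))"
  shows "(-1)^(n-j) * hermite_fun n x > 0"
proof -
  have inj: "inj_on t {1..n}" using mono by (rule strict_mono_on_imp_inj_on)
  have card: "card (t ` {1..n}) = n" using card_image[OF inj] by simp
  have dl: "degree (Hp n) = n" "coeff (Hp n) n = 2 ^ n" using Hp_deg_lead by auto
  have nz: "Hp n \<noteq> 0" using dl by auto
  have roots: "\<forall>a\<in>t ` {1..n}. poly (Hp n) a = 0" using Z by (auto simp: hermite_poly[symmetric])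
  have fac: "poly (Hp n) x = 2 ^ n * (\<Prod>a\<in>t ` {1..n}. (x - a))"
    using roots_factor[OF _ roots nz] card dl by simp
  also have "(\<Prod>a\<in>t ` {1..n}. (x - a)) = (\<Prod>m\<in>{1..n}. (x - t m))"
    using prod.reindex[OF inj, of "\<lambda>a. x - a"] by simp
  also have "{1..n} = {1..j} \<union> {Suc j..n}" using j by auto
  also have "(\<Prod>m\<in>{1..j} \<union> {Suc j..n}. (x - t m)) = (\<Prod>m\<in>{1..j}. (x - t m)) * (\<Prod>m\<in>{Suc j..n}. (x - t m))"
    by (rule prod.union_disjoint) auto
  finally have fac2: "poly (Hp n) x = 2 ^ n * ((\<Prod>m\<in>{1..j}. (x - t m)) * (\<Prod>m\<in>{Suc j..n}. (x - t m)))" .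
  have P1: "(\<Prod>m\<in>{1..j}. (x - t m)) > 0"
  proof (rule prod_pos)
    fix m assume m: "m \<in> {1..j}"
    then have "t m \<le> t j" using j by (intro strict_mono_on_leD[OF mono]) auto
    moreover have "t j < x" using x m by auto
    ultimately show "0 < x - t m" by simp
  qed
  have P2: "(-1)^(n-j) * (\<Prod>m\<in>{Suc j..n}. (x - t m)) > 0"
  proof -
    have "(\<Prod>m\<in>{Suc j..n}. - (x - t m)) = (-1) ^ card {Suc j..n} * (\<Prod>m\<in>{Suc j..n}. (x - t m))"
      by (rule prod_uminus)
    moreover have "card {Suc j..n} = n - j" by simp
    moreover have "(\<Prod>m\<in>{Suc j..n}. - (x - t m)) > 0"
    proof (rule prod_pos)
      fix m assume m: "m \<in> {Suc j..n}"
      then have "t (Suc j) \<le> t m" using j by (intro strict_mono_on_leD[OF mono]) auto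
      moreover have "x < t (Suc j)" using x m by auto
      ultimately show "0 < - (x - t m)" by simp
    qed
    ultimately show ?thesis by simp
  qed
  have "(-1)^(n-j) * hermite_fun n x
      = exp (-(x\<^sup>2)) * 2 ^ n / (2 ^ n * fact n * sqrt pi) * ((\<Prod>m\<in>{1..j}. (x - t m)) * ((-1)^(n-j) * (\<Prod>m\<in>{Suc j..n}. (x - t m))))"
    unfolding hf_poly fac2 by (simp add: algebra_simps)
  also have "\<dots> > 0"
  proof (rule mult_pos_pos[OF _ mult_pos_pos[OF P1 P2]])
    show "0 < exp (-(x\<^sup>2)) * 2 ^ n / (2 ^ n * fact n * sqrt pi)" by simp
  qed
  finally show ?thesis .
qed

lemma neg_zeros:
  fixes t :: "nat \<Rightarrow> real"
  assumes mono: "strict_mono_on {1..n} t" and Z: "{x. hermite n x = 0} = t ` {1..n}"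
  shows "\<forall>m\<in>{1..n}. t m < 0 \<longleftrightarrow> m \<le> n div 2"
    and "odd n \<Longrightarrow> t (Suc (n div 2)) = 0"
    and "even n \<Longrightarrow> \<forall>m\<in>{1..n}. t m \<noteq> 0"
proof -
  define K where "K = n div 2"
  define Zs where "Zs = t ` {1..n}"
  have inj: "inj_on t {1..n}" using mono by (rule strict_mono_on_imp_inj_on)
  have card: "card Zs = n" unfolding Zs_def using card_image[OF inj] by simp
  have sym: "-x \<in> Zs" if "x \<in> Zs" for x
  proof -
    have "hermite n x = 0" using that Z unfolding Zs_def by auto
    then have "hermite n (-x) = 0" by (simp add: hermite_poly Hp_parity)
    then show ?thesis using Z unfolding Zs_def by auto
  qed
  define neg where "neg = {x\<in>Zs. x < 0}"
  define pos where "pos = {x\<in>Zs. x > 0}"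
  have fZ: "finite Zs" unfolding Zs_def by simp
  have "uminus ` neg = pos"
  proof
    show "uminus ` neg \<subseteq> pos" unfolding neg_def pos_def using sym by auto
    show "pos \<subseteq> uminus ` neg"
    proof
      fix x assume "x \<in> pos"
      then have "-x \<in> neg" "x = - (- x)" unfolding neg_def pos_def using sym by auto
      then show "x \<in> uminus ` neg" by blast
    qed
  qed
  then have cnp: "card pos = card neg" by (metis card_image inj_on_def neg_equal_iff_equal)
  have split: "Zs = neg \<union> pos \<union> (Zs \<inter> {0})" unfolding neg_def pos_def by auto
  have "card Zs = card neg + card pos + card (Zs \<inter> {0})"
  proof -
    have f1: "finite neg" "finite pos" "finite (Zs \<inter> {0})" using fZ unfolding neg_def pos_def by auto
    have "card (neg \<union> pos \<union> (Zs \<inter> {0})) = card (neg \<union> pos) + card (Zs \<inter> {0})"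
      by (rule card_Un_disjoint) (use f1 in \<open>auto simp: neg_def pos_def\<close>)
    also have "card (neg \<union> pos) = card neg + card pos"
      by (rule card_Un_disjoint) (use f1 in \<open>auto simp: neg_def pos_def\<close>)
    finally show ?thesis using split by simp
  qed
  moreover have c0: "card (Zs \<inter> {0}) = (if 0 \<in> Zs then 1 else 0)" by auto
  ultimately have cn: "n = 2 * card neg + (if 0 \<in> Zs then 1 else 0)" using card cnp by simp
  then have cneg: "card neg = K" and z0: "0 \<in> Zs \<longleftrightarrow> odd n" unfolding K_def by (auto split: if_splits)
  define A where "A = {m\<in>{1..n}. t m < 0}"
  have "t ` A = neg" unfolding A_def neg_def Zs_def by auto
  moreover have "inj_on t A" using inj unfolding A_def by (rule inj_on_subset) auto
  ultimately have cA: "card A = K" using cneg card_image by metis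
  have down: "m' \<in> A" if "m \<in> A" "1 \<le> m'" "m' \<le> m" for m m'
  proof -
    have "t m' \<le> t m" using that unfolding A_def by (intro strict_mono_on_leD[OF mono]) auto
    then show ?thesis using that unfolding A_def by auto
  qed
  have A_eq: "m \<in> A \<longleftrightarrow> m \<le> K" if m: "m \<in> {1..n}" for m
  proof
    assume mA: "m \<in> A"
    have "{1..m} \<subseteq> A" using down[OF mA] by auto
    then have "card {1..m} \<le> card A" by (intro card_mono) (auto simp: A_def)
    then show "m \<le> K" using cA by simp
  next
    assume mK: "m \<le> K"
    show "m \<in> A"
    proof (rule ccontr)
      assume "m \<notin> A"
      then have "A \<subseteq> {1..m - 1}" using down[of _ m] m unfolding A_def by force
      then have "card A \<le> m - 1" using card_mono[of "{1..m-1}" A] by simp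
      then show False using cA mK m by auto
    qed
  qed
  then show "\<forall>m\<in>{1..n}. t m < 0 \<longleftrightarrow> m \<le> n div 2" unfolding A_def K_def by auto
  show "odd n \<Longrightarrow> t (Suc (n div 2)) = 0"
  proof -
    assume on: "odd n"
    then obtain m0 where m0: "m0 \<in> {1..n}" "t m0 = 0" using z0 unfolding Zs_def by auto
    have "\<not> m0 \<le> K" using A_eq[OF m0(1)] m0(2) unfolding A_def by auto
    moreover have "\<not> Suc K < m0"
    proof
      assume "Suc K < m0"
      then have "t (Suc K) < t m0" using m0 by (intro strict_mono_onD[OF mono]) auto
      moreover have "Suc K \<in> {1..n}" using \<open>Suc K < m0\<close> m0 by auto
      ultimately show False using A_eq[of "Suc K"] m0 unfolding A_def by auto
    qed
    ultimately have "m0 = Suc K" by simp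
    then show ?thesis using m0 unfolding K_def by simp
  qed
  show "even n \<Longrightarrow> \<forall>m\<in>{1..n}. t m \<noteq> 0" using z0 unfolding Zs_def by auto
qed



lemma neg1_a: "m \<le> n \<Longrightarrow> (-1::real)^(n-m) = (-1)^n * (-1)^m"
proof -
  assume "m \<le> n"
  then obtain k where n: "n = m + k" using le_Suc_ex by blast
  show ?thesis unfolding n by (cases "even m") (auto simp: power_add)
qed

lemma neg1_b: "1 \<le> m \<Longrightarrow> m \<le> n \<Longrightarrow> (-1::real)^(n-(m-1)) = - ((-1)^n * (-1)^m)"
proof -
  assume "1 \<le> m" "m \<le> n"
  then have "n - (m - 1) = Suc (n - m)" by simp
  then show ?thesis using neg1_a[OF \<open>m \<le> n\<close>] by simp
qed

lemma sum_split3: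
  fixes f :: "nat \<Rightarrow> real"
  assumes "a \<le> Suc K" "Suc K \<le> b"
  shows "(\<Sum>m=a..b. f m) = (\<Sum>m=a..K. f m) + f (Suc K) + (\<Sum>m=Suc (Suc K)..b. f m)"
proof -
  have e: "{a..b} = {a..K} \<union> ({Suc K} \<union> {Suc (Suc K)..b})" using assms by auto
  have "(\<Sum>m\<in>{a..K} \<union> ({Suc K} \<union> {Suc (Suc K)..b}). f m) = (\<Sum>m=a..K. f m) + (\<Sum>m\<in>{Suc K} \<union> {Suc (Suc K)..b}. f m)"
    by (rule sum.union_disjoint) auto
  also have "(\<Sum>m\<in>{Suc K} \<union> {Suc (Suc K)..b}. f m) = f (Suc K) + (\<Sum>m=Suc (Suc K)..b. f m)"
    by (subst sum.union_disjoint) auto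
  finally show ?thesis unfolding e by simp
qed

lemma inner_term_0: "i \<le> n - 1 \<Longrightarrow> inner_term n i 0 = fact (n - 1 - i) / 2 ^ i * hermite_fun (n - 1 - i) 0"
proof -
  have "inner_term n i 0 = (\<Sum>k=0..i. if k = i then fact (n - 1 - i) / 2 ^ i * hermite_fun (n - 1 - i) 0 else 0)"
    unfolding inner_term_def by (intro sum.cong refl) (auto simp: power_0_left)
  also have "\<dots> = fact (n - 1 - i) / 2 ^ i * hermite_fun (n - 1 - i) 0" by simp
  finally show ?thesis .
qed

theorem theorem3p3:
  fixes n i :: nat and t :: "nat \<Rightarrow> real"
  assumes n: "n \<ge> 1" and i: "i \<le> n - 1"
    and t_mono: "strict_mono_on {1..n} t"
    and t_zeros: "{x. hermite n x = 0} = t ` {1..n}"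
  shows
   "(even i \<longrightarrow>
       integrable lborel (\<lambda>x. x ^ i / fact i * \<bar>hermite_fun n x\<bar>) \<and>
       (\<integral>x. x ^ i / fact i * \<bar>hermite_fun n x\<bar> \<partial>lborel) =
         1 / fact n * (\<Sum>m=1..n. (-1) ^ (m + n) * inner_term n i (t m))) \<and>
    (odd i \<and> even n \<longrightarrow>
       integrable lborel (\<lambda>x. \<bar>x\<bar> ^ i / fact i * \<bar>hermite_fun n x\<bar>) \<and>
       (\<integral>x. \<bar>x\<bar> ^ i / fact i * \<bar>hermite_fun n x\<bar> \<partial>lborel) =
         1 / fact n * (\<Sum>m=1..n div 2. (-1) ^ (m + 1) * inner_term n i (t m))
         + (-1) ^ (n div 2) * fact (n - 1 - i) / (fact n * 2 ^ i) * hermite_fun (n - 1 - i) 0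
         + 1 / fact n * (\<Sum>m=n div 2 + 1..n. (-1) ^ m * inner_term n i (t m))) \<and>
    (odd i \<and> odd n \<longrightarrow>
       integrable lborel (\<lambda>x. \<bar>x\<bar> ^ i / fact i * \<bar>hermite_fun n x\<bar>) \<and>
       (\<integral>x. \<bar>x\<bar> ^ i / fact i * \<bar>hermite_fun n x\<bar> \<partial>lborel) =
         1 / fact n * (\<Sum>m=1..(n - 1) div 2. (-1) ^ m * inner_term n i (t m))
         + 1 / fact n * (\<Sum>m=(n + 3) div 2..n. (-1) ^ (m + 1) * inner_term n i (t m)))"
proof -
  have i_lt: "i < n" using n i by linarith
  define f where "f x = x ^ i / fact i * hermite_fun n x" for x
  define F where "F x = - inner_term n i x / (2 * fact n)" for x
  define S where "S = inner_term n i"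
  have Fd: "(F has_real_derivative f x) (at x)" for x
  proof -
    have "((\<lambda>x. - inner_term n i x / (2 * fact n)) has_real_derivative
        - (- (2 * fact n * x ^ i / fact i * hermite_fun n x)) / (2 * fact n)) (at x)"
      by (intro DERIV_cdivide DERIV_minus inner_deriv i_lt)
    then show ?thesis unfolding F_def[abs_def] f_def by simp
  qed
  have fc: "isCont f x" for x unfolding f_def[abs_def] by (intro continuous_intros hf_cont) auto
  have Ftop: "(F \<longlongrightarrow> 0) at_top"
  proof -
    have "((\<lambda>x. inner_term n i x / (2*fact n)) \<longlongrightarrow> 0) at_top"
      by (rule tendsto_divide_zero[OF inner_lim[OF good_at_top]])
    then have "((\<lambda>x. - (inner_term n i x / (2*fact n))) \<longlongrightarrow> - 0) at_top" by (rule tendsto_minus)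
    then show ?thesis unfolding F_def[abs_def] by simp
  qed
  have Fbot: "(F \<longlongrightarrow> 0) at_bot"
  proof -
    have "((\<lambda>x. inner_term n i x / (2*fact n)) \<longlongrightarrow> 0) at_bot"
      by (rule tendsto_divide_zero[OF inner_lim[OF good_at_bot]])
    then have "((\<lambda>x. - (inner_term n i x / (2*fact n))) \<longlongrightarrow> - 0) at_bot" by (rule tendsto_minus)
    then show ?thesis unfolding F_def[abs_def] by simp
  qed
  have absh: "\<bar>hermite_fun n x\<bar> = (-1)^(n-j) * hermite_fun n x"
    if "j \<le> n" "(j = 0 \<or> t j < x) \<and> (j = n \<or> x < t (Suc j))" for j x
  proof -
    have p: "(-1)^(n-j) * hermite_fun n x > 0" using hermite_sign[OF t_mono t_zeros that] .
    have "\<bar>hermite_fun n x\<bar> = \<bar>(-1)^(n-j) * hermite_fun n x\<bar>" by (simp add: abs_mult)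
    then show ?thesis using p by simp
  qed
  have FS: "F x = - S x / (2 * fact n)" for x unfolding F_def S_def ..
  have fn0: "fact n \<noteq> (0::real)" by simp
  have case1: "even i \<longrightarrow>
       integrable lborel (\<lambda>x. x ^ i / fact i * \<bar>hermite_fun n x\<bar>) \<and>
       (\<integral>x. x ^ i / fact i * \<bar>hermite_fun n x\<bar> \<partial>lborel) =
         1 / fact n * (\<Sum>m=1..n. (-1) ^ (m + n) * inner_term n i (t m))"
  proof
    assume ei: "even i"
    define e :: "nat \<Rightarrow> real" where "e j = (-1)^(n-j)" for j
    have gc: "continuous_on UNIV (\<lambda>x. x ^ i / fact i * \<bar>hermite_fun n x\<bar>)"
      by (intro continuous_at_imp_continuous_on ballI continuous_intros hf_cont) auto
    have R: "integrable lborel (\<lambda>x. x ^ i / fact i * \<bar>hermite_fun n x\<bar>) \<and>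
      integral\<^sup>L lborel (\<lambda>x. x ^ i / fact i * \<bar>hermite_fun n x\<bar>) = (\<Sum>m=1..n. (e (m - 1) - e m) * F (t m))"
    proof (rule piecewise_integral[OF n t_mono Fd fc Ftop Fbot gc])
      fix j x assume j: "j \<le> n" and x: "j = 0 \<or> t j < x" "j = n \<or> x < t (Suc j)"
      have a: "\<bar>hermite_fun n x\<bar> = (-1)^(n-j) * hermite_fun n x" using absh j x by blast
      have "0 \<le> x ^ i / fact i * \<bar>hermite_fun n x\<bar>" using ei by (simp add: zero_le_even_power)
      then show "x ^ i / fact i * \<bar>hermite_fun n x\<bar> = e j * f x \<and> 0 \<le> e j * f x"
        unfolding a e_def f_def by (simp add: algebra_simps)
    qed
    have "(\<Sum>m=1..n. (e (m - 1) - e m) * F (t m)) = (\<Sum>m=1..n. 1 / fact n * ((-1) ^ (m + n) * inner_term n i (t m)))"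
    proof (rule sum.cong[OF refl])
      fix m assume m: "m \<in> {1..n}"
      have "e (m - 1) = - ((-1)^n * (-1)^m)" "e m = (-1)^n * (-1)^m"
        using m neg1_a neg1_b unfolding e_def by auto
      then show "(e (m - 1) - e m) * F (t m) = 1 / fact n * ((-1) ^ (m + n) * inner_term n i (t m))"
        unfolding F_def using fn0 by (simp add: power_add field_simps)
    qed
    then show "integrable lborel (\<lambda>x. x ^ i / fact i * \<bar>hermite_fun n x\<bar>) \<and>
       (\<integral>x. x ^ i / fact i * \<bar>hermite_fun n x\<bar> \<partial>lborel) =
         1 / fact n * (\<Sum>m=1..n. (-1) ^ (m + n) * inner_term n i (t m))"
      using R by (simp add: sum_distrib_left)
  qed
  have gc2: "continuous_on UNIV (\<lambda>x. \<bar>x\<bar> ^ i / fact i * \<bar>hermite_fun n x\<bar>)"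
    by (intro continuous_at_imp_continuous_on ballI continuous_intros hf_cont) auto
  define K where "K = n div 2"
  have tneg: "\<forall>m\<in>{1..n}. t m < 0 \<longleftrightarrow> m \<le> K" using neg_zeros(1)[OF t_mono t_zeros] unfolding K_def .
  have S0: "S 0 = fact (n - 1 - i) / 2 ^ i * hermite_fun (n - 1 - i) 0"
    unfolding S_def by (rule inner_term_0[OF i])
  have absx_neg: "\<bar>x\<bar> ^ i = - (x ^ i)" if "odd i" "x < 0" for x :: real
    using that by (simp add: power_minus_odd)
  have absx_pos: "\<bar>x\<bar> ^ i = x ^ i" if "0 < x" for x :: real
    using that by simp
  have case3: "odd i \<and> odd n \<longrightarrow>
       integrable lborel (\<lambda>x. \<bar>x\<bar> ^ i / fact i * \<bar>hermite_fun n x\<bar>) \<and>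
       (\<integral>x. \<bar>x\<bar> ^ i / fact i * \<bar>hermite_fun n x\<bar> \<partial>lborel) =
         1 / fact n * (\<Sum>m=1..(n - 1) div 2. (-1) ^ m * inner_term n i (t m))
         + 1 / fact n * (\<Sum>m=(n + 3) div 2..n. (-1) ^ (m + 1) * inner_term n i (t m))"
  proof
    assume oo: "odd i \<and> odd n"
    then have oi: "odd i" and on: "odd n" by auto
    have t0: "t (Suc K) = 0" using neg_zeros(2)[OF t_mono t_zeros on] unfolding K_def .
    have KS: "Suc K \<le> n" "(n - 1) div 2 = K" "(n + 3) div 2 = Suc (Suc K)" using on n unfolding K_def
      by (auto elim!: oddE)
    define e :: "nat \<Rightarrow> real" where "e j = (if j \<le> K then - ((-1)^(n-j)) else (-1)^(n-j))" for j
    have R: "integrable lborel (\<lambda>x. \<bar>x\<bar> ^ i / fact i * \<bar>hermite_fun n x\<bar>) \<and>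
      integral\<^sup>L lborel (\<lambda>x. \<bar>x\<bar> ^ i / fact i * \<bar>hermite_fun n x\<bar>) = (\<Sum>m=1..n. (e (m - 1) - e m) * F (t m))"
    proof (rule piecewise_integral[OF n t_mono Fd fc Ftop Fbot gc2])
      fix j x assume j: "j \<le> n" and x: "j = 0 \<or> t j < x" "j = n \<or> x < t (Suc j)"
      have a: "\<bar>hermite_fun n x\<bar> = (-1)^(n-j) * hermite_fun n x" using absh j x by blast
      have "\<bar>x\<bar> ^ i / fact i * \<bar>hermite_fun n x\<bar> = e j * f x"
      proof (cases "j \<le> K")
        case True
        then have "j \<noteq> n" "Suc j \<le> Suc K" using KS by auto
        then have "x < t (Suc j)" "t (Suc j) \<le> t (Suc K)" using x KS
          by (auto intro!: strict_mono_on_leD[OF t_mono])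
        then have "x < 0" using t0 by simp
        then show ?thesis unfolding a absx_neg[OF oi \<open>x < 0\<close>] e_def f_def using True by simp
      next
        case False
        then have "j \<noteq> 0" "Suc K \<le> j" by auto
        then have "t j < x" "t (Suc K) \<le> t j" using x j
          by (auto intro!: strict_mono_on_leD[OF t_mono])
        then have "0 < x" using t0 by simp
        then show ?thesis unfolding a absx_pos[OF \<open>0 < x\<close>] e_def f_def using False by simp
      qed
      moreover have "0 \<le> \<bar>x\<bar> ^ i / fact i * \<bar>hermite_fun n x\<bar>" by simp
      ultimately show "\<bar>x\<bar> ^ i / fact i * \<bar>hermite_fun n x\<bar> = e j * f x \<and> 0 \<le> e j * f x" by simp
    qed
    have "(\<Sum>m=1..n. (e (m - 1) - e m) * F (t m)) =
       (\<Sum>m=1..K. (e (m - 1) - e m) * F (t m)) + (e K - e (Suc K)) * F (t (Suc K)) +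
       (\<Sum>m=Suc (Suc K)..n. (e (m - 1) - e m) * F (t m))"
      using sum_split3[of 1 K n] KS by simp
    also have "(\<Sum>m=1..K. (e (m - 1) - e m) * F (t m)) = (\<Sum>m=1..K. 1 / fact n * ((-1) ^ m * inner_term n i (t m)))"
    proof (rule sum.cong[OF refl])
      fix m assume m: "m \<in> {1..K}"
      have mm: "m - 1 \<le> K" "m \<le> K" "1 \<le> m" "m \<le> n" using m KS(1) by auto
      have "e (m - 1) = (-1)^n * (-1)^m" "e m = - ((-1)^n * (-1)^m)"
        using neg1_a[OF mm(4)] neg1_b[OF mm(3,4)] mm(1,2) unfolding e_def by auto
      then show "(e (m - 1) - e m) * F (t m) = 1 / fact n * ((-1) ^ m * inner_term n i (t m))"
        unfolding F_def using fn0 on by (simp add: field_simps)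
    qed
    also have "e K - e (Suc K) = 0"
      using neg1_a[of K n] neg1_a[of "Suc K" n] KS unfolding e_def by simp
    also have "(\<Sum>m=Suc (Suc K)..n. (e (m - 1) - e m) * F (t m)) = (\<Sum>m=Suc (Suc K)..n. 1 / fact n * ((-1) ^ (m + 1) * inner_term n i (t m)))"
    proof (rule sum.cong[OF refl])
      fix m assume m: "m \<in> {Suc (Suc K)..n}"
      then have "e (m - 1) = - ((-1)^n * (-1)^m)" "e m = (-1)^n * (-1)^m"
        using neg1_a[of m n] neg1_b[of m n] unfolding e_def by auto
      then show "(e (m - 1) - e m) * F (t m) = 1 / fact n * ((-1) ^ (m + 1) * inner_term n i (t m))"
        unfolding F_def using fn0 on by (simp add: field_simps)
    qed
    finally show "integrable lborel (\<lambda>x. \<bar>x\<bar> ^ i / fact i * \<bar>hermite_fun n x\<bar>) \<and>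
       (\<integral>x. \<bar>x\<bar> ^ i / fact i * \<bar>hermite_fun n x\<bar> \<partial>lborel) =
         1 / fact n * (\<Sum>m=1..(n - 1) div 2. (-1) ^ m * inner_term n i (t m))
         + 1 / fact n * (\<Sum>m=(n + 3) div 2..n. (-1) ^ (m + 1) * inner_term n i (t m))"
      using R KS by (simp add: sum_distrib_left)
  qed
  have case2: "odd i \<and> even n \<longrightarrow>
       integrable lborel (\<lambda>x. \<bar>x\<bar> ^ i / fact i * \<bar>hermite_fun n x\<bar>) \<and>
       (\<integral>x. \<bar>x\<bar> ^ i / fact i * \<bar>hermite_fun n x\<bar> \<partial>lborel) =
         1 / fact n * (\<Sum>m=1..n div 2. (-1) ^ (m + 1) * inner_term n i (t m))
         + (-1) ^ (n div 2) * fact (n - 1 - i) / (fact n * 2 ^ i) * hermite_fun (n - 1 - i) 0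
         + 1 / fact n * (\<Sum>m=n div 2 + 1..n. (-1) ^ m * inner_term n i (t m))"
  proof
    assume oe: "odd i \<and> even n"
    then have oi: "odd i" and en: "even n" by auto
    have tnz: "\<forall>m\<in>{1..n}. t m \<noteq> 0" using neg_zeros(3)[OF t_mono t_zeros en] .
    have KS: "1 \<le> K" "Suc K \<le> n" using en n unfolding K_def by (auto elim!: evenE)
    have tpos: "0 < t m" if "m \<in> {1..n}" "K < m" for m
      using tneg tnz that by (metis linorder_not_less linorder_neqE_linordered_idom)
    have tneg': "t m < 0" if "1 \<le> m" "m \<le> K" for m using tneg that KS by auto
    define s where "s m = (if m \<le> K then t m else if m = Suc K then 0 else t (m - 1))" for m
    have s_mono: "strict_mono_on {1..Suc n} s"
    proof (rule strict_mono_onI)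
      fix p q assume p: "p \<in> {1..Suc n}" and q: "q \<in> {1..Suc n}" and pq: "p < q"
      show "s p < s q"
      proof (cases "q \<le> K")
        case True
        then show ?thesis using p q pq KS unfolding s_def by (auto intro!: strict_mono_onD[OF t_mono])
      next
        case qK: False
        show ?thesis
        proof (cases "q = Suc K")
          case True
          then have "p \<le> K" using pq by simp
          then show ?thesis using True tneg'[of p] p unfolding s_def by auto
        next
          case False
          then have q1: "q - 1 \<in> {1..n}" "K < q - 1" using qK q by auto
          have sq: "s q = t (q - 1)" using qK False unfolding s_def by simp
          show ?thesis
          proof (cases "p \<le> Suc K")
            case True
            then have "s p \<le> 0" using tneg'[of p] p unfolding s_def by auto
            then show ?thesis using sq tpos[OF q1] by simp
          next
            case False
            then have "s p = t (p - 1)" "p - 1 \<in> {1..n}" "p - 1 < q - 1" using p pq unfolding s_def by auto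
            then show ?thesis using sq q1 by (auto intro!: strict_mono_onD[OF t_mono])
          qed
        qed
      qed
    qed
    define e :: "nat \<Rightarrow> real" where "e j = (if j \<le> K then - ((-1)^(n-j)) else (-1)^(n-(j-1)))" for j
    have N1: "1 \<le> Suc n" by simp
    have R: "integrable lborel (\<lambda>x. \<bar>x\<bar> ^ i / fact i * \<bar>hermite_fun n x\<bar>) \<and>
      integral\<^sup>L lborel (\<lambda>x. \<bar>x\<bar> ^ i / fact i * \<bar>hermite_fun n x\<bar>) = (\<Sum>m=1..Suc n. (e (m - 1) - e m) * F (s m))"
    proof (rule piecewise_integral[OF N1 s_mono Fd fc Ftop Fbot gc2])
      fix j x assume j: "j \<le> Suc n" and x: "j = 0 \<or> s j < x" "j = Suc n \<or> x < s (Suc j)"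
      have "\<bar>x\<bar> ^ i / fact i * \<bar>hermite_fun n x\<bar> = e j * f x"
      proof (cases "j \<le> K")
        case True
        have x1: "j = 0 \<or> t j < x" using x(1) True unfolding s_def by auto
        have "x < s (Suc j)" using x(2) True KS by auto
        moreover have "s (Suc j) \<le> t (Suc j)" "s (Suc j) \<le> 0"
          using tpos[of "Suc j"] tneg'[of "Suc j"] True KS unfolding s_def by auto
        ultimately have x2: "x < t (Suc j)" "x < 0" by auto
        have a: "\<bar>hermite_fun n x\<bar> = (-1)^(n-j) * hermite_fun n x"
          using absh[of j x] x1 x2 True KS by auto
        show ?thesis unfolding a absx_neg[OF oi \<open>x < 0\<close>] e_def f_def using True by simp
      next
        case False
        then have j0: "j \<noteq> 0" "K < j" by auto
        have "s j < x" using x(1) j0 by auto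
        moreover have "0 \<le> s j \<and> t (j - 1) \<le> s j"
        proof (cases "j = Suc K")
          case True
          then show ?thesis using tneg'[of K] KS unfolding s_def by auto
        next
          case jK: False
          then have "K < j - 1" "j - 1 \<le> n" "1 \<le> j - 1" using False j KS by auto
          then show ?thesis using tpos[of "j - 1"] False jK unfolding s_def by auto
        qed
        ultimately have x1: "t (j - 1) < x" "0 < x" by auto
        have x2: "j - 1 = n \<or> x < t (Suc (j - 1))"
        proof (cases "j = Suc n")
          case False
          then have "x < s (Suc j)" using x(2) by auto
          moreover have "s (Suc j) = t (Suc (j - 1))" using j0 unfolding s_def by auto
          ultimately show ?thesis by simp
        qed simp
        have a: "\<bar>hermite_fun n x\<bar> = (-1)^(n-(j-1)) * hermite_fun n x"
          using absh[of "j - 1" x] x1 x2 j by auto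
        show ?thesis unfolding a absx_pos[OF \<open>0 < x\<close>] e_def f_def using False by simp
      qed
      moreover have "0 \<le> \<bar>x\<bar> ^ i / fact i * \<bar>hermite_fun n x\<bar>" by simp
      ultimately show "\<bar>x\<bar> ^ i / fact i * \<bar>hermite_fun n x\<bar> = e j * f x \<and> 0 \<le> e j * f x" by simp
    qed
    have "(\<Sum>m=1..Suc n. (e (m - 1) - e m) * F (s m)) =
       (\<Sum>m=1..K. (e (m - 1) - e m) * F (s m)) + (e K - e (Suc K)) * F (s (Suc K)) +
       (\<Sum>m=Suc (Suc K)..Suc n. (e (m - 1) - e m) * F (s m))"
      using sum_split3[of 1 K "Suc n"] KS by simp
    also have "(\<Sum>m=1..K. (e (m - 1) - e m) * F (s m)) = (\<Sum>m=1..K. 1 / fact n * ((-1) ^ (m + 1) * inner_term n i (t m)))"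
    proof (rule sum.cong[OF refl])
      fix m assume m: "m \<in> {1..K}"
      have mm: "m - 1 \<le> K" "m \<le> K" "1 \<le> m" "m \<le> n" using m KS by auto
      have "e (m - 1) = (-1)^n * (-1)^m" "e m = - ((-1)^n * (-1)^m)"
        using neg1_a[OF mm(4)] neg1_b[OF mm(3,4)] mm(1,2) unfolding e_def by auto
      moreover have "s m = t m" using mm unfolding s_def by simp
      ultimately show "(e (m - 1) - e m) * F (s m) = 1 / fact n * ((-1) ^ (m + 1) * inner_term n i (t m))"
        unfolding F_def using fn0 en by (simp add: field_simps)
    qed
    also have "(e K - e (Suc K)) * F (s (Suc K)) = (-1) ^ K * fact (n - 1 - i) / (fact n * 2 ^ i) * hermite_fun (n - 1 - i) 0"
    proof -
      have eK: "e K = - ((-1)^K)" "e (Suc K) = (-1)^K"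
        using neg1_a[of K n] KS en unfolding e_def by auto
      have Fv: "F (s (Suc K)) = - (fact (n - 1 - i) / 2 ^ i * hermite_fun (n - 1 - i) 0) / (2 * fact n)"
        unfolding s_def FS S0[symmetric] by simp
      show ?thesis unfolding eK Fv using fn0 by (simp add: field_simps)
    qed
    also have "(\<Sum>m=Suc (Suc K)..Suc n. (e (m - 1) - e m) * F (s m)) = (\<Sum>m=Suc K..n. (e m - e (Suc m)) * F (s (Suc m)))"
      using sum.shift_bounds_cl_Suc_ivl[of "\<lambda>m. (e (m - 1) - e m) * F (s m)" "Suc K" n] by simp
    also have "\<dots> = (\<Sum>m=Suc K..n. 1 / fact n * ((-1) ^ m * inner_term n i (t m)))"
    proof (rule sum.cong[OF refl])
      fix m assume m: "m \<in> {Suc K..n}"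
      have mm: "\<not> m \<le> K" "\<not> Suc m \<le> K" "1 \<le> m" "m \<le> n" using m KS by auto
      have "e m = - ((-1)^n * (-1)^m)" "e (Suc m) = (-1)^n * (-1)^m"
        using neg1_a[OF mm(4)] neg1_b[OF mm(3,4)] mm(1,2) unfolding e_def by auto
      moreover have "s (Suc m) = t m" using mm unfolding s_def by simp
      ultimately show "(e m - e (Suc m)) * F (s (Suc m)) = 1 / fact n * ((-1) ^ m * inner_term n i (t m))"
        unfolding F_def using fn0 en by (simp add: field_simps)
    qed
    finally show "integrable lborel (\<lambda>x. \<bar>x\<bar> ^ i / fact i * \<bar>hermite_fun n x\<bar>) \<and>
       (\<integral>x. \<bar>x\<bar> ^ i / fact i * \<bar>hermite_fun n x\<bar> \<partial>lborel) =
         1 / fact n * (\<Sum>m=1..n div 2. (-1) ^ (m + 1) * inner_term n i (t m))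
         + (-1) ^ (n div 2) * fact (n - 1 - i) / (fact n * 2 ^ i) * hermite_fun (n - 1 - i) 0
         + 1 / fact n * (\<Sum>m=n div 2 + 1..n. (-1) ^ m * inner_term n i (t m))"
      using R unfolding K_def by (simp add: sum_distrib_left)
  qed
  show ?thesis using case1 case2 case3 by blast
qed

end
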